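(* If an atomic flow is normal for $\mathsf c$, then all its $\mathsf{ai}$-paths are clean paths.
   Context: An atomic flow is a tuple $(V,E,\eta,up,lo)$: finite sets of vertices and edges, a labelling of vertices by interaction, cut, weakening, coweakening, contraction or cocontraction, and maps $up:E\to V\cup\{\top\}$, $lo:E\to V\cup\{\bot\}$. Upper edges of $\nu$: $lo(\epsilon)=\nu$; lower edges: $up(\epsilon)=\nu$. (Upper, lower) edge numbers: $(0,2)$ interaction, $(2,0)$ cut, $(0,1)$ weakening, $(1,0)$ coweakening, $(2,1)$ contraction, $(1,2)$ cocontraction; no directed cycles; there is $\pi:E\to\{+,-\}$ giving all edges of a (co)contraction the same sign and the two edges of an interaction/cut different signs. A path from $\nu$ to $\nu'$ is a sequence of edges $\epsilon_1,\dots,\epsilon_h$ with $lo(\epsilon_i)=up(\epsilon_{i+1})$, $up(\epsilon_1)=\nu$, $lo(\epsilon_h)=\nu'$; its reversal is a path from $\nu'$ to $\nu$. An $\mathsf{ai}$-path from $\nu$ to $\nu'$ is either a path from $\nu$ to $\nu'$ or a sequence $\epsilon_1,\dots,\epsilon_k,\epsilon_{k+1},\dots,\epsilon_h$ with $\epsilon_k\neq\epsilon_{k+1}$ such that, for some interaction or cut vertex $\nu''$, $\epsilon_1,\dots,\epsilon_k$ is an $\mathsf{ai}$-path from $\nu$ to $\nu''$ and $\epsilon_{k+1},\dots,\epsilon_h$ is an $\mathsf{ai}$-path from $\nu''$ to $\nu'$. An $\mathsf{ai}$-connection is a path from an interaction vertex to a cut vertex or from a cut vertex to an interaction vertex. A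 simple edge is an $\mathsf{ai}$-connection consisting of a single edge. A clean path is an $\mathsf{ai}$-path in which every $\mathsf{ai}$-connection (occurring in it) is a simple edge. A flow is normal for $\mathsf c$ if none of the following patterns occurs in it: (c1) a contraction whose lower edge is an upper edge of a cut; (c2) an interaction one of whose lower edges is the upper edge of a cocontraction; (c3) a contraction whose lower edge is the upper edge of a cocontraction. *)

theory Defs
  imports Main
begin

datatype kind = Interaction | Cut | Weakening | Coweakening | Contraction | Cocontraction

datatype 'v endpoint = Top | Bot | Vtx 'v

datatype polarity = Plus | Minus

record ('v, 'e) flow =
  verts :: "'v set"
  edges :: "'e set"
  eta :: "'v \<Rightarrow> kind"
  up :: "'e \<Rightarrow> 'v endpoint"
  lo :: "'e \<Rightarrow> 'v endpoint"

definition upper_edges :: "('v, 'e) flow \<Rightarrow> 'v \<Rightarrow> 'e set" where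
  "upper_edges F \<nu> = {\<epsilon> \<in> edges F. lo F \<epsilon> = Vtx \<nu>}"

definition lower_edges :: "('v, 'e) flow \<Rightarrow> 'v \<Rightarrow> 'e set" where
  "lower_edges F \<nu> = {\<epsilon> \<in> edges F. up F \<epsilon> = Vtx \<nu>}"

fun n_upper :: "kind \<Rightarrow> nat" where
  "n_upper Interaction = 0" | "n_upper Cut = 2" | "n_upper Weakening = 0"
| "n_upper Coweakening = 1" | "n_upper Contraction = 2" | "n_upper Cocontraction = 1"

fun n_lower :: "kind \<Rightarrow> nat" where
  "n_lower Interaction = 2" | "n_lower Cut = 0" | "n_lower Weakening = 1"
| "n_lower Coweakening = 0" | "n_lower Contraction = 1" | "n_lower Cocontraction = 2"

definition dpath :: "('v, 'e) flow \<Rightarrow> 'v \<Rightarrow> 'v \<Rightarrow> 'e list \<Rightarrow> bool" where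
  "dpath F \<nu> \<nu>' es \<longleftrightarrow> es \<noteq> [] \<and> set es \<subseteq> edges F
     \<and> up F (hd es) = Vtx \<nu> \<and> lo F (last es) = Vtx \<nu>'
     \<and> (\<forall>i. Suc i < length es \<longrightarrow> lo F (es ! i) = up F (es ! Suc i))"

definition atomic_flow :: "('v, 'e) flow \<Rightarrow> bool" where
  "atomic_flow F \<longleftrightarrow>
     finite (verts F) \<and> finite (edges F)
   \<and> (\<forall>\<epsilon> \<in> edges F. up F \<epsilon> = Top \<or> (\<exists>\<nu>\<in>verts F. up F \<epsilon> = Vtx \<nu>))
   \<and> (\<forall>\<epsilon> \<in> edges F. lo F \<epsilon> = Bot \<or> (\<exists>\<nu>\<in>verts F. lo F \<epsilon> = Vtx \<nu>))
   \<and> (\<forall>\<nu> \<in> verts F. card (upper_edges F \<nu>) = n_upper (eta F \<nu>)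
                    \<and> card (lower_edges F \<nu>) = n_lower (eta F \<nu>))
   \<and> \<not> (\<exists>\<nu> es. dpath F \<nu> \<nu> es)
   \<and> (\<exists>\<pi> :: 'e \<Rightarrow> polarity.
        \<forall>\<nu> \<in> verts F.
          (eta F \<nu> \<in> {Contraction, Cocontraction} \<longrightarrow>
             (\<forall>\<epsilon>1 \<in> upper_edges F \<nu> \<union> lower_edges F \<nu>.
              \<forall>\<epsilon>2 \<in> upper_edges F \<nu> \<union> lower_edges F \<nu>. \<pi> \<epsilon>1 = \<pi> \<epsilon>2))
        \<and> (eta F \<nu> = Interaction \<longrightarrow>
             (\<forall>\<epsilon>1 \<in> lower_edges F \<nu>. \<forall>\<epsilon>2 \<in> lower_edges F \<nu>. \<epsilon>1 \<noteq> \<epsilon>2 \<longrightarrow> \<pi> \<epsilon>1 \<noteq> \<pi> \<epsilon>2))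
        \<and> (eta F \<nu> = Cut \<longrightarrow>
             (\<forall>\<epsilon>1 \<in> upper_edges F \<nu>. \<forall>\<epsilon>2 \<in> upper_edges F \<nu>. \<epsilon>1 \<noteq> \<epsilon>2 \<longrightarrow> \<pi> \<epsilon>1 \<noteq> \<pi> \<epsilon>2)))"

definition is_path :: "('v, 'e) flow \<Rightarrow> 'v \<Rightarrow> 'v \<Rightarrow> 'e list \<Rightarrow> bool" where
  "is_path F \<nu> \<nu>' es \<longleftrightarrow> dpath F \<nu> \<nu>' es \<or> dpath F \<nu>' \<nu> (rev es)"

inductive ai_path :: "('v, 'e) flow \<Rightarrow> 'v \<Rightarrow> 'v \<Rightarrow> 'e list \<Rightarrow> bool" for F where
  base: "is_path F \<nu> \<nu>' es \<Longrightarrow> ai_path F \<nu> \<nu>' es"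
| join: "\<lbrakk> ai_path F \<nu> \<nu>'' es1; ai_path F \<nu>'' \<nu>' es2; \<nu>'' \<in> verts F;
           eta F \<nu>'' \<in> {Interaction, Cut}; last es1 \<noteq> hd es2 \<rbrakk>
         \<Longrightarrow> ai_path F \<nu> \<nu>' (es1 @ es2)"

definition ai_connection :: "('v, 'e) flow \<Rightarrow> 'e list \<Rightarrow> bool" where
  "ai_connection F es \<longleftrightarrow> (\<exists>\<nu> \<in> verts F. \<exists>\<nu>' \<in> verts F. is_path F \<nu> \<nu>' es \<and>
      ((eta F \<nu> = Interaction \<and> eta F \<nu>' = Cut) \<or> (eta F \<nu> = Cut \<and> eta F \<nu>' = Interaction)))"

definition simple_edge :: "('v, 'e) flow \<Rightarrow> 'e list \<Rightarrow> bool" where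
  "simple_edge F es \<longleftrightarrow> ai_connection F es \<and> length es = 1"

definition clean_path :: "('v, 'e) flow \<Rightarrow> 'v \<Rightarrow> 'v \<Rightarrow> 'e list \<Rightarrow> bool" where
  "clean_path F \<nu> \<nu>' es \<longleftrightarrow> ai_path F \<nu> \<nu>' es \<and>
     (\<forall>xs c ys. es = xs @ c @ ys \<and> ai_connection F c \<longrightarrow> simple_edge F c)"

definition normal_c :: "('v, 'e) flow \<Rightarrow> bool" where
  "normal_c F \<longleftrightarrow>
     \<not> (\<exists>\<nu>\<in>verts F. \<exists>\<nu>'\<in>verts F. \<exists>\<epsilon>\<in>edges F. eta F \<nu> = Contraction \<and> eta F \<nu>' = Cut
          \<and> \<epsilon> \<in> lower_edges F \<nu> \<and> \<epsilon> \<in> upper_edges F \<nu>')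
   \<and> \<not> (\<exists>\<nu>\<in>verts F. \<exists>\<nu>'\<in>verts F. \<exists>\<epsilon>\<in>edges F. eta F \<nu> = Interaction \<and> eta F \<nu>' = Cocontraction
          \<and> \<epsilon> \<in> lower_edges F \<nu> \<and> \<epsilon> \<in> upper_edges F \<nu>')
   \<and> \<not> (\<exists>\<nu>\<in>verts F. \<exists>\<nu>'\<in>verts F. \<exists>\<epsilon>\<in>edges F. eta F \<nu> = Contraction \<and> eta F \<nu>' = Cocontraction
          \<and> \<epsilon> \<in> lower_edges F \<nu> \<and> \<epsilon> \<in> upper_edges F \<nu>')"

end

theory Submission
  imports Defs
begin

lemma edge_nonempty:
  assumes "atomic_flow F" "\<nu> \<in> verts F"
  shows "\<epsilon> \<in> upper_edges F \<nu> \<Longrightarrow> n_upper (eta F \<nu>) \<noteq> 0"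
    and "\<epsilon> \<in> lower_edges F \<nu> \<Longrightarrow> n_lower (eta F \<nu>) \<noteq> 0"
proof -
  have fin: "finite (edges F)" using assms(1) unfolding atomic_flow_def by blast
  have c: "card (upper_edges F \<nu>) = n_upper (eta F \<nu>)" "card (lower_edges F \<nu>) = n_lower (eta F \<nu>)"
    using assms unfolding atomic_flow_def by auto
  have f1: "finite (upper_edges F \<nu>)" "finite (lower_edges F \<nu>)"
    using fin unfolding upper_edges_def lower_edges_def by auto
  show "\<epsilon> \<in> upper_edges F \<nu> \<Longrightarrow> n_upper (eta F \<nu>) \<noteq> 0"
    using c f1 card_0_eq by fastforce
  show "\<epsilon> \<in> lower_edges F \<nu> \<Longrightarrow> n_lower (eta F \<nu>) \<noteq> 0"
    using c f1 card_0_eq by fastforce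
qed

lemma lo_vtx:
  assumes "atomic_flow F" "\<epsilon> \<in> edges F" "\<delta> \<in> edges F" "lo F \<epsilon> = up F \<delta>"
  shows "\<exists>w\<in>verts F. lo F \<epsilon> = Vtx w"
proof -
  have b1: "\<forall>\<epsilon>\<in>edges F. lo F \<epsilon> = Bot \<or> (\<exists>\<nu>\<in>verts F. lo F \<epsilon> = Vtx \<nu>)"
    using assms(1) unfolding atomic_flow_def by (meson conjunct1 conjunct2)
  have b2: "\<forall>\<epsilon>\<in>edges F. up F \<epsilon> = Top \<or> (\<exists>\<nu>\<in>verts F. up F \<epsilon> = Vtx \<nu>)"
    using assms(1) unfolding atomic_flow_def by (meson conjunct1 conjunct2)
  have a1: "lo F \<epsilon> = Bot \<or> (\<exists>\<nu>\<in>verts F. lo F \<epsilon> = Vtx \<nu>)"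
    using b1 assms(2) by blast
  have a2: "up F \<delta> = Top \<or> (\<exists>\<nu>\<in>verts F. up F \<delta> = Vtx \<nu>)"
    using b2 assms(3) by blast
  note a = a1 a2
  show ?thesis using a assms(4) by auto
qed

lemma contr_chain:
  assumes af: "atomic_flow F" and nc: "normal_c F"
    and dp: "dpath F \<nu> \<nu>' es" and nv: "\<nu> \<in> verts F" and ei: "eta F \<nu> = Interaction"
  shows "Suc i < length es \<Longrightarrow> \<exists>w\<in>verts F. lo F (es ! i) = Vtx w \<and> eta F w = Contraction"
proof (induction i)
  case 0
  have ed: "set es \<subseteq> edges F" using dp unfolding dpath_def by blast
  have e0: "es ! 0 \<in> edges F" "es ! 1 \<in> edges F" using 0 ed by (auto intro!: subsetD[OF ed] nth_mem)
  have link: "lo F (es ! 0) = up F (es ! 1)" using 0 dp unfolding dpath_def by auto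
  obtain w where w: "w \<in> verts F" "lo F (es ! 0) = Vtx w" using lo_vtx[OF af e0 link] by blast
  have u: "es ! 0 \<in> upper_edges F w" using w e0 unfolding upper_edges_def by auto
  have l: "es ! 1 \<in> lower_edges F w" using w e0 link unfolding lower_edges_def by auto
  have l0: "es ! 0 \<in> lower_edges F \<nu>" using dp e0 0 unfolding dpath_def lower_edges_def
    by (auto simp: hd_conv_nth)
  have "n_upper (eta F w) \<noteq> 0" "n_lower (eta F w) \<noteq> 0"
    using edge_nonempty[OF af w(1)] u l by blast+
  hence "eta F w = Contraction \<or> eta F w = Cocontraction" by (cases "eta F w") auto
  moreover have "eta F w \<noteq> Cocontraction"
    using nc nv w(1) e0 ei l0 u unfolding normal_c_def by blast
  ultimately show ?case using w by auto
next
  case (Suc i)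
  then obtain u where u: "u \<in> verts F" "lo F (es ! i) = Vtx u" "eta F u = Contraction" by auto
  have ed: "set es \<subseteq> edges F" using dp unfolding dpath_def by blast
  have e0: "es ! Suc i \<in> edges F" "es ! Suc (Suc i) \<in> edges F" using Suc.prems by (auto intro!: subsetD[OF ed] nth_mem)
  have link0: "lo F (es ! i) = up F (es ! Suc i)" using Suc.prems dp unfolding dpath_def by auto
  have link: "lo F (es ! Suc i) = up F (es ! Suc (Suc i))" using Suc.prems dp unfolding dpath_def by auto
  obtain w where w: "w \<in> verts F" "lo F (es ! Suc i) = Vtx w" using lo_vtx[OF af e0 link] by blast
  have uw: "es ! Suc i \<in> upper_edges F w" using w e0 unfolding upper_edges_def by auto
  have l: "es ! Suc (Suc i) \<in> lower_edges F w" using w e0 link unfolding lower_edges_def by auto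
  have l0: "es ! Suc i \<in> lower_edges F u" using e0 link0 u unfolding lower_edges_def by auto
  have "n_upper (eta F w) \<noteq> 0" "n_lower (eta F w) \<noteq> 0"
    using edge_nonempty[OF af w(1)] uw l by blast+
  hence "eta F w = Contraction \<or> eta F w = Cocontraction" by (cases "eta F w") auto
  moreover have "eta F w \<noteq> Cocontraction"
    using nc u w(1) e0 l0 uw unfolding normal_c_def by blast
  ultimately show ?case using w by auto
qed

lemma conn_len:
  assumes af: "atomic_flow F" and nc: "normal_c F"
    and dp: "dpath F \<nu> \<nu>' es" and nv: "\<nu> \<in> verts F" and ei: "eta F \<nu> = Interaction"
    and nv': "\<nu>' \<in> verts F" and ec: "eta F \<nu>' = Cut"
  shows "length es = 1"
proof (rule ccontr)
  assume "length es \<noteq> 1"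
  moreover have "es \<noteq> []" using dp unfolding dpath_def by blast
  ultimately have len: "length es \<ge> 2" by (cases es) (auto simp: Suc_le_eq)
  define i where "i = length es - 2"
  have si: "Suc i < length es" using len unfolding i_def by auto
  obtain w where w: "w \<in> verts F" "lo F (es ! i) = Vtx w" "eta F w = Contraction"
    using contr_chain[OF af nc dp nv ei si] by blast
  have ed: "set es \<subseteq> edges F" using dp unfolding dpath_def by blast
  have e: "es ! Suc i \<in> edges F" using si by (auto intro!: subsetD[OF ed] nth_mem)
  have link: "lo F (es ! i) = up F (es ! Suc i)" using si dp unfolding dpath_def by auto
  have "Suc i = length es - 1" using len unfolding i_def by simp
  hence last: "es ! Suc i = last es" using \<open>es \<noteq> []\<close> by (simp add: last_conv_nth)
  have "lo F (es ! Suc i) = Vtx \<nu>'" using dp last unfolding dpath_def by auto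
  hence "es ! Suc i \<in> upper_edges F \<nu>'" using e unfolding upper_edges_def by auto
  moreover have "es ! Suc i \<in> lower_edges F w" using e link w unfolding lower_edges_def by auto
  ultimately show False using nc w nv' ec e unfolding normal_c_def by blast
qed

lemma no_dpath_from_cut:
  assumes af: "atomic_flow F" and dp: "dpath F \<nu> \<nu>' es" and nv: "\<nu> \<in> verts F"
    and ec: "eta F \<nu> = Cut"
  shows False
proof -
  have "hd es \<in> edges F" using dp unfolding dpath_def by auto
  hence "hd es \<in> lower_edges F \<nu>" using dp unfolding dpath_def lower_edges_def by auto
  thus False using edge_nonempty(2)[OF af nv] ec by auto
qed

lemma conn_simple:
  assumes af: "atomic_flow F" and nc: "normal_c F" and c: "ai_connection F c"
  shows "simple_edge F c"
proof -
  obtain \<nu> \<nu>' where v: "\<nu> \<in> verts F" "\<nu>' \<in> verts F" "is_path F \<nu> \<nu>' c"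
    "(eta F \<nu> = Interaction \<and> eta F \<nu>' = Cut) \<or> (eta F \<nu> = Cut \<and> eta F \<nu>' = Interaction)"
    using c unfolding ai_connection_def by blast
  have "length c = 1"
    using v(4)
  proof
    assume h: "eta F \<nu> = Interaction \<and> eta F \<nu>' = Cut"
    show ?thesis using v(3) unfolding is_path_def
    proof
      assume "dpath F \<nu> \<nu>' c" thus ?thesis using conn_len[OF af nc _ v(1) _ v(2)] h by blast
    next
      assume "dpath F \<nu>' \<nu> (rev c)" thus ?thesis using no_dpath_from_cut[OF af _ v(2)] h by blast
    qed
  next
    assume h: "eta F \<nu> = Cut \<and> eta F \<nu>' = Interaction"
    show ?thesis using v(3) unfolding is_path_def
    proof
      assume "dpath F \<nu> \<nu>' c" thus ?thesis using no_dpath_from_cut[OF af _ v(1)] h by blast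
    next
      assume "dpath F \<nu>' \<nu> (rev c)"
      hence "length (rev c) = 1" using conn_len[OF af nc _ v(2) _ v(1)] h by blast
      thus ?thesis by simp
    qed
  qed
  thus ?thesis using c unfolding simple_edge_def by blast
qed

theorem proposition4p18:
  fixes F :: "('v, 'e) flow"
  assumes "atomic_flow F"
    and "normal_c F"
    and "ai_path F \<nu> \<nu>' es"
  shows "clean_path F \<nu> \<nu>' es"
  using assms conn_simple unfolding clean_path_def by blast

end
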